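(* Let $F$ be $(\ell,\omega)$-relatively smooth on $\mathcal X\cap\mathcal S$ and suppose that $(x,y)\mapsto\sqrt{D^{\mathrm{sym}}_\omega(x,y)}$ is a metric. Then for any $x\in\mathcal X\cap\mathcal S$ and any $\rho,s>0$ with $\rho>\ell/s+2\ell$, $$\frac{\Delta_\rho(x)}{C(\ell,\rho,s)}\le\Delta^+_\rho(x)\le C(\ell,\rho,s)\,\Delta_\rho(x),\qquad C(\ell,\rho,s):=\frac{(1+s)(\rho-\ell)+(1+s^{-1})\ell}{\rho-\ell-(1+s^{-1})\ell}.$$ In particular, for $s=1$, $\rho=4\ell$ one has $C(\ell,\rho,s)=8$ and $\frac18\Delta_{4\ell}(x)\le\Delta^+_{4\ell}(x)\le8\Delta_{4\ell}(x)$.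
   Context: Let $\mathcal X\subseteq\mathbb R^d$ be closed and convex, $\|\cdot\|$ a norm on $\mathbb R^d$. The problem is $\min_{x\in\mathcal X}\Phi(x):=F(x)+r(x)$, with $F$ differentiable and $r:\mathbb R^d\to\mathbb R$ convex, proper, lower semicontinuous. A DGF is $\omega:\mathrm{cl}(\mathcal S)\to\mathbb R$, $\mathcal S$ open with $\mathrm{ri}(\mathcal X)\subseteq\mathcal S$, $\omega$ continuously differentiable on $\mathcal S$ and $1$-strongly convex w.r.t. $\|\cdot\|$ on $\mathrm{cl}(\mathcal S)$; $D_\omega(x,y)=\omega(x)-\omega(y)-\langle\nabla\omega(y),x-y\rangle$ and $D^{\mathrm{sym}}_\omega(x,y):=D_\omega(x,y)+D_\omega(y,x)$. For $\rho>0$ and $x\in\mathcal X\cap\mathcal S$: $\hat x:=\arg\min_{y\in\mathcal X}[\Phi(y)+\rho D_\omega(y,x)]$, $\Delta_\rho(x):=\rho^2D^{\mathrm{sym}}_\omega(\hat x,x)$ (Bregman proximal mapping); $x^+:=\arg\min_{y\in\mathcal X}[\langle\nabla F(x),y\rangle+r(y)+\rho D_\omega(y,x)]$, $\Delta^+_\rho(x):=\rho^2D^{\mathrm{sym}}_\omega(x^+,x)$ (Bregman gradient mapping); these minimizers are assumed to exist. $F$ is $(\ell,\omega)$-relatively smooth on $\mathcal X\cap\mathcal S$ if for all $x,y\in\mathcal X\cap\mathcal S$: $-\ell D_\omega(x,y)\le F(x)-F(y)-\langle\nabla F(y),x-y\rangle\le\ell D_\omega(x,y)$. *)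

theory Defs
  imports "HOL-Analysis.Analysis"
begin

text \<open>A norm on the (finite-dimensional) space 'a (arbitrary, not necessarily Euclidean).\<close>
definition is_norm :: "('a::real_vector \<Rightarrow> real) \<Rightarrow> bool" where
  "is_norm N \<longleftrightarrow> (\<forall>x. N x \<ge> 0) \<and> (\<forall>x. N x = 0 \<longleftrightarrow> x = 0)
     \<and> (\<forall>c x. N (c *\<^sub>R x) = \<bar>c\<bar> * N x) \<and> (\<forall>x y. N (x + y) \<le> N x + N y)"

definition lsc :: "('a::topological_space \<Rightarrow> real) \<Rightarrow> bool" where
  "lsc f \<longleftrightarrow> (\<forall>c. closed {x. f x \<le> c})"

definition strongly_convex_on :: "('a::real_vector \<Rightarrow> real) \<Rightarrow> 'a set \<Rightarrow> ('a \<Rightarrow> real) \<Rightarrow> bool" where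
  "strongly_convex_on N C w \<longleftrightarrow> convex C \<and>
     (\<forall>x\<in>C. \<forall>y\<in>C. \<forall>t\<in>{0..1}.
        w (t *\<^sub>R x + (1 - t) *\<^sub>R y) \<le> t * w x + (1 - t) * w y - t * (1 - t) / 2 * (N (x - y))\<^sup>2)"

definition is_DGF :: "('a::euclidean_space \<Rightarrow> real) \<Rightarrow> 'a set \<Rightarrow> 'a set \<Rightarrow> ('a \<Rightarrow> real) \<Rightarrow> ('a \<Rightarrow> 'a) \<Rightarrow> bool" where
  "is_DGF N X S w gw \<longleftrightarrow> open S \<and> rel_interior X \<subseteq> S
     \<and> (\<forall>x\<in>S. (w has_derivative (\<lambda>h. gw x \<bullet> h)) (at x)) \<and> continuous_on S gw
     \<and> strongly_convex_on N (closure S) w"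

definition Breg :: "('a::real_inner \<Rightarrow> real) \<Rightarrow> ('a \<Rightarrow> 'a) \<Rightarrow> 'a \<Rightarrow> 'a \<Rightarrow> real" where
  "Breg w gw x y = w x - w y - gw y \<bullet> (x - y)"

definition Bsym :: "('a::real_inner \<Rightarrow> real) \<Rightarrow> ('a \<Rightarrow> 'a) \<Rightarrow> 'a \<Rightarrow> 'a \<Rightarrow> real" where
  "Bsym w gw x y = Breg w gw x y + Breg w gw y x"

definition sqrt_Bsym_metric_on :: "('a::real_inner \<Rightarrow> real) \<Rightarrow> ('a \<Rightarrow> 'a) \<Rightarrow> 'a set \<Rightarrow> bool" where
  "sqrt_Bsym_metric_on w gw A \<longleftrightarrow>
     (\<forall>x\<in>A. \<forall>y\<in>A. Bsym w gw x y \<ge> 0)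
   \<and> (\<forall>x\<in>A. \<forall>y\<in>A. sqrt (Bsym w gw x y) = 0 \<longleftrightarrow> x = y)
   \<and> (\<forall>x\<in>A. \<forall>y\<in>A. sqrt (Bsym w gw x y) = sqrt (Bsym w gw y x))
   \<and> (\<forall>x\<in>A. \<forall>y\<in>A. \<forall>z\<in>A. sqrt (Bsym w gw x z) \<le> sqrt (Bsym w gw x y) + sqrt (Bsym w gw y z))"

definition rel_smooth :: "real \<Rightarrow> ('a::real_inner \<Rightarrow> real) \<Rightarrow> ('a \<Rightarrow> 'a) \<Rightarrow> ('a \<Rightarrow> real) \<Rightarrow> ('a \<Rightarrow> 'a) \<Rightarrow> 'a set \<Rightarrow> bool" where
  "rel_smooth l F gF w gw A \<longleftrightarrow> (\<forall>x\<in>A. \<forall>y\<in>A.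
      - l * Breg w gw x y \<le> F x - F y - gF y \<bullet> (x - y)
    \<and> F x - F y - gF y \<bullet> (x - y) \<le> l * Breg w gw x y)"

definition is_bprox :: "('a::real_inner \<Rightarrow> real) \<Rightarrow> ('a \<Rightarrow> real) \<Rightarrow> ('a \<Rightarrow> real) \<Rightarrow> ('a \<Rightarrow> 'a) \<Rightarrow> 'a set \<Rightarrow> real \<Rightarrow> 'a \<Rightarrow> 'a \<Rightarrow> bool" where
  "is_bprox F r w gw X \<rho> x xh \<longleftrightarrow> xh \<in> X \<and>
     (\<forall>y\<in>X. F xh + r xh + \<rho> * Breg w gw xh x \<le> F y + r y + \<rho> * Breg w gw y x)"

definition is_bgrad :: "('a::real_inner \<Rightarrow> 'a) \<Rightarrow> ('a \<Rightarrow> real) \<Rightarrow> ('a \<Rightarrow> real) \<Rightarrow> ('a \<Rightarrow> 'a) \<Rightarrow> 'a set \<Rightarrow> real \<Rightarrow> 'a \<Rightarrow> 'a \<Rightarrow> bool" where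
  "is_bgrad gF r w gw X \<rho> x xp \<longleftrightarrow> xp \<in> X \<and>
     (\<forall>y\<in>X. gF x \<bullet> xp + r xp + \<rho> * Breg w gw xp x \<le> gF x \<bullet> y + r y + \<rho> * Breg w gw y x)"

definition Cconst :: "real \<Rightarrow> real \<Rightarrow> real \<Rightarrow> real" where
  "Cconst l \<rho> s = ((1 + s) * (\<rho> - l) + (1 + 1 / s) * l) / (\<rho> - l - (1 + 1 / s) * l)"

end

theory Submission
  imports Defs
begin


lemma vi:
  fixes a r :: "'a::euclidean_space \<Rightarrow> real"
  assumes X: "convex X" and m: "m \<in> X" and y: "y \<in> X" and r: "convex_on UNIV r"
    and da: "(a has_derivative (\<lambda>h. g \<bullet> h)) (at m)"
    and mn: "\<forall>z\<in>X. a m + r m \<le> a z + r z"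
  shows "g \<bullet> (y - m) + r y - r m \<ge> 0"
proof -
  define d where "d = y - m"
  define f where "f t = a (m + t *\<^sub>R d)" for t :: real
  have "((\<lambda>t::real. m + t *\<^sub>R d) has_derivative (\<lambda>h. h *\<^sub>R d)) (at 0)"
    by (auto intro!: derivative_eq_intros)
  moreover have "(a has_derivative (\<lambda>h. g \<bullet> h)) (at (m + (0::real) *\<^sub>R d))" using da by simp
  ultimately have "((\<lambda>t. a (m + t *\<^sub>R d)) has_derivative (\<lambda>h. g \<bullet> (h *\<^sub>R d))) (at 0)"
    by (rule has_derivative_compose)
  then
  have "(f has_derivative (\<lambda>h. g \<bullet> (h *\<^sub>R d))) (at 0)"
    unfolding f_def by simp
  hence "(f has_field_derivative (g \<bullet> d)) (at 0)"
    unfolding has_field_derivative_def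
  proof -
    assume h: "(f has_derivative (\<lambda>h. g \<bullet> (h *\<^sub>R d))) (at 0)"
    have "(\<lambda>h. g \<bullet> (h *\<^sub>R d)) = (*) (g \<bullet> d)" by (rule ext) simp
    with h show "(f has_derivative (*) (g \<bullet> d)) (at 0)" by simp
  qed
  hence lim: "((\<lambda>h. (f (0 + h) - f 0) / h) \<longlongrightarrow> g \<bullet> d) (at_right 0)"
    unfolding DERIV_def filterlim_at_split by blast
  have ev: "\<forall>\<^sub>F t in at_right 0. r m - r y \<le> (f (0 + t) - f 0) / t"
    unfolding eventually_at_right_field
  proof (intro exI[of _ 1] conjI allI impI)
    fix t :: real assume t0: "0 < t" and t1: "t < 1"
    note t = t0 t1
    have pt: "m + t *\<^sub>R d = (1 - t) *\<^sub>R m + t *\<^sub>R y"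
      by (simp add: d_def algebra_simps)
    have inX: "m + t *\<^sub>R d \<in> X" unfolding pt
      using X m y t by (simp add: convex_def)
    have c: "r (m + t *\<^sub>R d) \<le> (1 - t) * r m + t * r y"
      unfolding pt using convex_onD[OF r, of t m y] t by simp
    have "a m + r m \<le> a (m + t *\<^sub>R d) + r (m + t *\<^sub>R d)" using mn inX by blast
    hence "t * (r m - r y) \<le> f t - f 0" using c unfolding f_def by (simp add: algebra_simps)
    thus "r m - r y \<le> (f (0 + t) - f 0) / t" using t by (simp add: field_simps)
  qed (simp)
  have "r m - r y \<le> g \<bullet> d"
    by (rule tendsto_lowerbound[OF lim ev]) simp
  thus ?thesis unfolding d_def by simp
qed

lemma alg:
  fixes a b c l \<rho> s :: real
  assumes "a \<ge> 0" "b \<ge> 0" "c \<ge> 0" "a \<le> b + c" "(\<rho> - l) * c\<^sup>2 \<le> l * (a\<^sup>2 + b\<^sup>2)"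
    "s > 0" "l \<ge> 0" "\<rho> > l / s + 2 * l"
  shows "a\<^sup>2 * (\<rho> - l - (1 + 1 / s) * l) \<le> b\<^sup>2 * ((1 + s) * (\<rho> - l) + (1 + 1 / s) * l)"
proof -
  have "2 * b * c \<le> s * b\<^sup>2 + c\<^sup>2 / s"
  proof -
    have "0 \<le> (s * b - c)\<^sup>2 / s" using assms by simp
    also have "\<dots> = s * b\<^sup>2 + c\<^sup>2 / s - 2 * b * c" using assms
      by (simp add: field_simps power2_eq_square)
    finally show ?thesis by simp
  qed
  moreover have "a\<^sup>2 \<le> (b + c)\<^sup>2" using assms by (simp add: power_mono)
  ultimately have h1: "a\<^sup>2 \<le> (1 + s) * b\<^sup>2 + (1 + 1 / s) * c\<^sup>2"
    by (simp add: power2_eq_square field_simps)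
  have rl: "\<rho> - l \<ge> 0" using assms
    by (smt (verit) divide_nonneg_pos)
  have "(\<rho> - l) * a\<^sup>2 \<le> (\<rho> - l) * ((1 + s) * b\<^sup>2 + (1 + 1 / s) * c\<^sup>2)"
    using h1 rl by (rule mult_left_mono)
  also have "\<dots> = (1 + s) * (\<rho> - l) * b\<^sup>2 + (1 + 1 / s) * ((\<rho> - l) * c\<^sup>2)"
    using assms by (simp add: field_simps)
  also have "\<dots> \<le> (1 + s) * (\<rho> - l) * b\<^sup>2 + (1 + 1 / s) * (l * (a\<^sup>2 + b\<^sup>2))"
    using assms by (intro add_left_mono mult_left_mono) auto
  finally show ?thesis by (simp add: algebra_simps)
qed
theorem lemma1:
  fixes X S :: "'a::euclidean_space set"
    and N :: "'a \<Rightarrow> real"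
    and F r w :: "'a \<Rightarrow> real"
    and gF gw :: "'a \<Rightarrow> 'a"
    and l :: real and x :: 'a
  assumes X: "closed X" "convex X"
    and N: "is_norm N"
    and F: "\<forall>z. (F has_derivative (\<lambda>h. gF z \<bullet> h)) (at z)"
    and r: "convex_on UNIV r" "lsc r"
    and w: "is_DGF N X S w gw"
    and sm: "rel_smooth l F gF w gw (X \<inter> S)"
    and met: "sqrt_Bsym_metric_on w gw (X \<inter> S)"
    and x: "x \<in> X \<inter> S"
  shows "(\<forall>\<rho> s xh xp. \<rho> > 0 \<and> s > 0 \<and> \<rho> > l / s + 2 * l
            \<and> xh \<in> S \<and> is_bprox F r w gw X \<rho> x xh
            \<and> xp \<in> S \<and> is_bgrad gF r w gw X \<rho> x xp
          \<longrightarrow> \<rho>\<^sup>2 * Bsym w gw xh x / Cconst l \<rho> s \<le> \<rho>\<^sup>2 * Bsym w gw xp x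
            \<and> \<rho>\<^sup>2 * Bsym w gw xp x \<le> Cconst l \<rho> s * (\<rho>\<^sup>2 * Bsym w gw xh x))
       \<and> (l > 0 \<longrightarrow> Cconst l (4 * l) 1 = 8
            \<and> (\<forall>xh xp. xh \<in> S \<and> is_bprox F r w gw X (4 * l) x xh
                 \<and> xp \<in> S \<and> is_bgrad gF r w gw X (4 * l) x xp
               \<longrightarrow> (1 / 8) * ((4 * l)\<^sup>2 * Bsym w gw xh x) \<le> (4 * l)\<^sup>2 * Bsym w gw xp x
                 \<and> (4 * l)\<^sup>2 * Bsym w gw xp x \<le> 8 * ((4 * l)\<^sup>2 * Bsym w gw xh x)))"
  
proof -
  have Xc: "convex X" by fact
  have wd: "\<And>z. z \<in> S \<Longrightarrow> (w has_derivative (\<lambda>h. gw z \<bullet> h)) (at z)"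
    using w unfolding is_DGF_def by blast
  have smE: "\<And>p q. p \<in> X \<inter> S \<Longrightarrow> q \<in> X \<inter> S \<Longrightarrow>
      - l * Breg w gw p q \<le> F p - F q - gF q \<bullet> (p - q) \<and> F p - F q - gF q \<bullet> (p - q) \<le> l * Breg w gw p q"
    using sm unfolding rel_smooth_def by blast
  have metE: "\<And>p q. p \<in> X \<inter> S \<Longrightarrow> q \<in> X \<inter> S \<Longrightarrow> Bsym w gw p q \<ge> 0"
    "\<And>p q. p \<in> X \<inter> S \<Longrightarrow> q \<in> X \<inter> S \<Longrightarrow> sqrt (Bsym w gw p q) = 0 \<longleftrightarrow> p = q"
    "\<And>p q z. p \<in> X \<inter> S \<Longrightarrow> q \<in> X \<inter> S \<Longrightarrow> z \<in> X \<inter> S \<Longrightarrow>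
       sqrt (Bsym w gw p z) \<le> sqrt (Bsym w gw p q) + sqrt (Bsym w gw q z)"
    using met unfolding sqrt_Bsym_metric_on_def by blast+
  have part1: "\<rho>\<^sup>2 * Bsym w gw xh x / Cconst l \<rho> s \<le> \<rho>\<^sup>2 * Bsym w gw xp x
            \<and> \<rho>\<^sup>2 * Bsym w gw xp x \<le> Cconst l \<rho> s * (\<rho>\<^sup>2 * Bsym w gw xh x)"
    if hyp: "\<rho> > 0" "s > 0" "\<rho> > l / s + 2 * l" "xh \<in> S" "is_bprox F r w gw X \<rho> x xh"
       "xp \<in> S" "is_bgrad gF r w gw X \<rho> x xp" for \<rho> s xh xp
  proof -
    have xhX: "xh \<in> X" and mh: "\<forall>y\<in>X. F xh + r xh + \<rho> * Breg w gw xh x \<le> F y + r y + \<rho> * Breg w gw y x"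
      using hyp(5) unfolding is_bprox_def by auto
    have xpX: "xp \<in> X" and mp: "\<forall>y\<in>X. gF x \<bullet> xp + r xp + \<rho> * Breg w gw xp x \<le> gF x \<bullet> y + r y + \<rho> * Breg w gw y x"
      using hyp(7) unfolding is_bgrad_def by auto
    have xh: "xh \<in> X \<inter> S" and xp: "xp \<in> X \<inter> S" using xhX xpX hyp by auto
    show ?thesis
    proof (cases "l < 0")
      case True
      have z: "p = q" if "p \<in> X \<inter> S" "q \<in> X \<inter> S" for p q
      proof -
        have "Breg w gw p q \<le> 0" "Breg w gw q p \<le> 0"
          using smE[OF that] smE[OF that(2,1)] True
          by (smt (verit) mult_le_0_iff mult_minus_left)+
        hence "Bsym w gw p q = 0" using metE(1)[OF that] unfolding Bsym_def by linarith
        thus ?thesis using metE(2)[OF that] by simp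
      qed
      have "xh = x" "xp = x" using z[OF xh x] z[OF xp x] by auto
      moreover have "Bsym w gw x x = 0" unfolding Bsym_def Breg_def by simp
      ultimately show ?thesis by simp
    next
      case False
      hence l0: "l \<ge> 0" by simp
      have lB: "l * Breg w gw p q \<le> l * Bsym w gw p q" if "p \<in> X \<inter> S" "q \<in> X \<inter> S" for p q
      proof -
        have "0 \<le> l * Breg w gw q p" using smE[OF that(2,1)] by linarith
        thus ?thesis unfolding Bsym_def by (simp add: algebra_simps)
      qed
      have dh: "((\<lambda>z. F z + \<rho> * Breg w gw z x) has_derivative
          (\<lambda>h. (gF xh + \<rho> *\<^sub>R (gw xh - gw x)) \<bullet> h)) (at xh)"
      proof -
        have "((\<lambda>z. F z + \<rho> * (w z - w x - gw x \<bullet> (z - x))) has_derivative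
          (\<lambda>h. gF xh \<bullet> h + \<rho> * (gw xh \<bullet> h - 0 - (gw x \<bullet> (h - 0))))) (at xh)"
          using F wd[OF hyp(4)]
          by (intro derivative_intros) auto
        thus ?thesis unfolding Breg_def by (simp add: inner_simps algebra_simps)
      qed
      have dp: "((\<lambda>z. gF x \<bullet> z + \<rho> * Breg w gw z x) has_derivative
          (\<lambda>h. (gF x + \<rho> *\<^sub>R (gw xp - gw x)) \<bullet> h)) (at xp)"
      proof -
        have "((\<lambda>z. gF x \<bullet> z + \<rho> * (w z - w x - gw x \<bullet> (z - x))) has_derivative
          (\<lambda>h. gF x \<bullet> h + \<rho> * (gw xp \<bullet> h - 0 - (gw x \<bullet> (h - 0))))) (at xp)"
          using wd[OF hyp(6)]
          by (intro derivative_intros) auto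
        thus ?thesis unfolding Breg_def by (simp add: inner_simps algebra_simps)
      qed
      have v1: "(gF xh + \<rho> *\<^sub>R (gw xh - gw x)) \<bullet> (xp - xh) + r xp - r xh \<ge> 0"
        by (rule vi[OF Xc xhX xpX r(1) dh]) (use mh in \<open>auto simp: algebra_simps\<close>)
      have v2: "(gF x + \<rho> *\<^sub>R (gw xp - gw x)) \<bullet> (xh - xp) + r xh - r xp \<ge> 0"
        by (rule vi[OF Xc xpX xhX r(1) dp]) (use mp in \<open>auto simp: algebra_simps\<close>)
      define E where "E p q = F p - F q - gF q \<bullet> (p - q)" for p q
      have iden: "(gF xh - gF x) \<bullet> (xp - xh) = E xp x - E xp xh - E xh x"
        unfolding E_def by (simp add: inner_simps algebra_simps)
      have bs: "Bsym w gw xp xh = (gw xp - gw xh) \<bullet> (xp - xh)"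
        unfolding Bsym_def Breg_def by (simp add: inner_simps algebra_simps)
      have "(gF xh + \<rho> *\<^sub>R (gw xh - gw x)) \<bullet> (xp - xh) + (gF x + \<rho> *\<^sub>R (gw xp - gw x)) \<bullet> (xh - xp)
          = (gF xh - gF x) \<bullet> (xp - xh) - \<rho> * ((gw xp - gw xh) \<bullet> (xp - xh))"
        by (simp add: inner_simps algebra_simps)
      hence key: "\<rho> * Bsym w gw xp xh \<le> E xp x - E xp xh - E xh x"
        unfolding bs iden[symmetric] using v1 v2 by linarith
      have e1: "E xp x \<le> l * Bsym w gw xp x" using smE[OF xp x] lB[OF xp x] unfolding E_def by linarith
      have e2: "- E xp xh \<le> l * Bsym w gw xp xh" using smE[OF xp xh] lB[OF xp xh] unfolding E_def by linarith
      have e3: "- E xh x \<le> l * Bsym w gw xh x" using smE[OF xh x] lB[OF xh x] unfolding E_def by linarith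
      define A where "A = Bsym w gw xp x"
      define B where "B = Bsym w gw xh x"
      define Cc where "Cc = Bsym w gw xp xh"
      have A0: "A \<ge> 0" "B \<ge> 0" "Cc \<ge> 0" using metE(1) xp xh x unfolding A_def B_def Cc_def by auto
      have Csym: "Bsym w gw xh xp = Cc" unfolding Cc_def Bsym_def by simp
      have ineq: "(\<rho> - l) * (sqrt Cc)\<^sup>2 \<le> l * ((sqrt A)\<^sup>2 + (sqrt B)\<^sup>2)"
        using key e1 e2 e3 A0 unfolding A_def[symmetric] B_def[symmetric] Cc_def[symmetric]
        by (simp add: algebra_simps)
      have t1: "sqrt A \<le> sqrt B + sqrt Cc" using metE(3)[OF xp xh x]
        unfolding A_def B_def Cc_def by simp
      have t2: "sqrt B \<le> sqrt A + sqrt Cc" using metE(3)[OF xh xp x] Csym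
        unfolding A_def B_def by simp
      have ineq2: "(\<rho> - l) * (sqrt Cc)\<^sup>2 \<le> l * ((sqrt B)\<^sup>2 + (sqrt A)\<^sup>2)"
        using ineq by (simp add: algebra_simps)
      define Nu where "Nu = (1 + s) * (\<rho> - l) + (1 + 1 / s) * l"
      define De where "De = \<rho> - l - (1 + 1 / s) * l"
      have a1: "A * De \<le> B * Nu"
        using alg[OF _ _ _ t1 ineq hyp(2) l0 hyp(3)] A0 unfolding Nu_def De_def by simp
      have a2: "B * De \<le> A * Nu"
        using alg[OF _ _ _ t2 ineq2 hyp(2) l0 hyp(3)] A0 unfolding Nu_def De_def by simp
      have De0: "De > 0" unfolding De_def using hyp(2,3) by (simp add: field_simps)
      have rl: "\<rho> - l \<ge> 0" using hyp l0
        by (smt (verit) divide_nonneg_pos)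
      have "Nu - De = s * (\<rho> - l) + 2 * ((1 + 1/s) * l)" unfolding Nu_def De_def by (simp add: algebra_simps)
      moreover have "s * (\<rho> - l) \<ge> 0" using rl hyp(2) by simp
      moreover have "(1 + 1/s) * l \<ge> 0" using l0 hyp(2) by simp
      ultimately have NuDe: "Nu \<ge> De" by linarith
      have CC: "Cconst l \<rho> s = Nu / De" unfolding Cconst_def Nu_def De_def by simp
      have C0: "Nu / De > 0" using De0 NuDe by simp
      have b1: "A \<le> Nu / De * B" using a1 De0 by (simp add: field_simps)
      have b2: "B / (Nu / De) \<le> A" using a2 De0 NuDe by (simp add: field_simps)
      have "\<rho>\<^sup>2 * B / (Nu / De) \<le> \<rho>\<^sup>2 * A"
        using mult_left_mono[OF b2, of "\<rho>\<^sup>2"] by simp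
      moreover have "\<rho>\<^sup>2 * A \<le> Nu / De * (\<rho>\<^sup>2 * B)"
        using mult_left_mono[OF b1, of "\<rho>\<^sup>2"] by (simp add: algebra_simps)
      ultimately show ?thesis unfolding CC A_def B_def by simp
    qed
  qed
  show ?thesis
  proof (intro conjI allI impI)
    fix \<rho> s xh xp
    assume "0 < \<rho> \<and> 0 < s \<and> l / s + 2 * l < \<rho> \<and> xh \<in> S \<and> is_bprox F r w gw X \<rho> x xh \<and>
       xp \<in> S \<and> is_bgrad gF r w gw X \<rho> x xp"
    thus "\<rho>\<^sup>2 * Bsym w gw xh x / Cconst l \<rho> s \<le> \<rho>\<^sup>2 * Bsym w gw xp x"
         "\<rho>\<^sup>2 * Bsym w gw xp x \<le> Cconst l \<rho> s * (\<rho>\<^sup>2 * Bsym w gw xh x)"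
      using part1 by blast+
  next
    assume l: "l > 0"
    show C8: "Cconst l (4 * l) 1 = 8" unfolding Cconst_def using l by (simp add: field_simps)
    fix xh xp
    assume h: "xh \<in> S \<and> is_bprox F r w gw X (4 * l) x xh \<and> xp \<in> S \<and> is_bgrad gF r w gw X (4 * l) x xp"
    have "4 * l > 0" "(1::real) > 0" "4 * l > l / 1 + 2 * l" using l by auto
    from part1[OF this] h C8
    show "1 / 8 * ((4 * l)\<^sup>2 * Bsym w gw xh x) \<le> (4 * l)\<^sup>2 * Bsym w gw xp x"
         "(4 * l)\<^sup>2 * Bsym w gw xp x \<le> 8 * ((4 * l)\<^sup>2 * Bsym w gw xh x)" by auto
  qed
qed

end
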